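(* Let $A$, $Q$, $H\subseteq A^Q$ be non-empty finite sets and $\mathcal F$ a clone with carrier $A$ such that (a) $\mathcal F$ satisfies $\Delta^\partial$, or (b) $\mathcal F$ contains a $\partial$-function and $|H(q)|\le2$ for all $q\in Q$. Suppose $H\in\mathrm{Inv}_Q\mathcal F$ and let $P=\{p,q\}\in[Q]^2$. Then one of the following holds: (1) $H|_P=\{g\in A^P: g(p)\in H(p),\ g(q)\in H(q)\}$; (2) there is $\sigma\in S_A$ such that $H|_P=\{g\in A^P: g(p)\in H(p),\ g(q)\in H(q),\ g(q)=\sigma(g(p))\}$; (3) there are $a,b\in A$ such that $H|_P=\{g\in A^P: g(p)\in H(p),\ g(q)\in H(q),\ (g(p)=a\text{ or }g(q)=b)\}$.
   Context: $\mathcal O(A)=\bigcup_{n<\omega}A^{A^n}$. A clone with carrier $A$ is a subset of $\mathcal O(A)$ containing all projections and closed under composition. For $f\in\mathcal O(A)_{[n]}$ and $h_i\in A^Q$, $f(h_0,\dots,h_{n-1})$ is $q\mapsto f(h_0(q)\dots h_{n-1}(q))$; $\mathrm{Inv}_Q\mathcal F$ is the set of $H\subseteq A^Q$ closed under all such compositions with $f\in\mathcal F$. $H(q)=\{h(q):h\in H\}$; $H|_P=\{h|_P:h\in H\}$; $[Q]^2$ is the set of 2-element subsets of $Q$; $S_A$ the set of permutations of $A$; $A^3_3$ the set of triples in $A^3$ with three distinct entries, $\mathrm{ran}\,\mathbf a$ the set of entries of $\mathbf a$. A $\partial$-function is $\partial\in\mathcal O(A)_{[3]}$ with $\partial(xxy)=\partial(xyx)=\partial(yxx)=x$;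 $\mathcal F$ satisfies $\Delta^\partial$ if for all $\mathbf a\in A^3_3$ and $a\in\mathrm{ran}\,\mathbf a$ there is a $\partial$-function $\partial\in\mathcal F$ with $\partial(\mathbf a)=a$. *)

theory Defs
  imports "HOL-Library.FuncSet"
begin

text \<open>An n-ary operation on A is represented as a pair (n, f) where f acts on lists
of length n over A and is undefined elsewhere (so equality is extensional).\<close>

definition valid_args :: "'a set \<Rightarrow> nat \<Rightarrow> 'a list \<Rightarrow> bool" where
  "valid_args A n xs \<longleftrightarrow> length xs = n \<and> set xs \<subseteq> A"

definition is_op :: "'a set \<Rightarrow> nat \<times> ('a list \<Rightarrow> 'a) \<Rightarrow> bool" where
  "is_op A nf \<longleftrightarrow> (\<forall>xs. valid_args A (fst nf) xs \<longrightarrow> snd nf xs \<in> A)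
      \<and> (\<forall>xs. \<not> valid_args A (fst nf) xs \<longrightarrow> snd nf xs = undefined)"

definition proj_op :: "'a set \<Rightarrow> nat \<Rightarrow> nat \<Rightarrow> nat \<times> ('a list \<Rightarrow> 'a)" where
  "proj_op A n i = (n, \<lambda>xs. if valid_args A n xs then xs ! i else undefined)"

definition comp_op :: "'a set \<Rightarrow> ('a list \<Rightarrow> 'a) \<Rightarrow> nat \<Rightarrow> nat \<Rightarrow> (nat \<Rightarrow> 'a list \<Rightarrow> 'a)
    \<Rightarrow> nat \<times> ('a list \<Rightarrow> 'a)" where
  "comp_op A f n m g = (m, \<lambda>xs. if valid_args A m xs then f (map (\<lambda>i. g i xs) [0..<n]) else undefined)"

definition clone :: "'a set \<Rightarrow> (nat \<times> ('a list \<Rightarrow> 'a)) set \<Rightarrow> bool" where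
  "clone A F \<longleftrightarrow> (\<forall>nf\<in>F. is_op A nf)
     \<and> (\<forall>n i. i < n \<longrightarrow> proj_op A n i \<in> F)
     \<and> (\<forall>n f m g. (n, f) \<in> F \<longrightarrow> (\<forall>i<n. (m, g i) \<in> F) \<longrightarrow> comp_op A f n m g \<in> F)"

definition apply_op :: "'q set \<Rightarrow> ('a list \<Rightarrow> 'a) \<Rightarrow> ('q \<Rightarrow> 'a) list \<Rightarrow> ('q \<Rightarrow> 'a)" where
  "apply_op Q f hs = (\<lambda>q\<in>Q. f (map (\<lambda>h. h q) hs))"

definition Inv :: "'a set \<Rightarrow> 'q set \<Rightarrow> (nat \<times> ('a list \<Rightarrow> 'a)) set \<Rightarrow> ('q \<Rightarrow> 'a) set set" where
  "Inv A Q F = {H. H \<subseteq> (Q \<rightarrow>\<^sub>E A) \<and>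
     (\<forall>n f hs. (n, f) \<in> F \<longrightarrow> length hs = n \<longrightarrow> set hs \<subseteq> H \<longrightarrow> apply_op Q f hs \<in> H)}"

definition proj_at :: "('q \<Rightarrow> 'a) set \<Rightarrow> 'q \<Rightarrow> 'a set" where
  "proj_at H q = (\<lambda>h. h q) ` H"

definition restr :: "('q \<Rightarrow> 'a) set \<Rightarrow> 'q set \<Rightarrow> ('q \<Rightarrow> 'a) set" where
  "restr H P = (\<lambda>h. restrict h P) ` H"

definition is_partial :: "'a set \<Rightarrow> nat \<times> ('a list \<Rightarrow> 'a) \<Rightarrow> bool" where
  "is_partial A nf \<longleftrightarrow> is_op A nf \<and> fst nf = 3 \<and>
     (\<forall>x\<in>A. \<forall>y\<in>A. snd nf [x,x,y] = x \<and> snd nf [x,y,x] = x \<and> snd nf [y,x,x] = x)"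

definition Delta_partial :: "'a set \<Rightarrow> (nat \<times> ('a list \<Rightarrow> 'a)) set \<Rightarrow> bool" where
  "Delta_partial A F \<longleftrightarrow> (\<forall>x\<in>A. \<forall>y\<in>A. \<forall>z\<in>A. x \<noteq> y \<and> y \<noteq> z \<and> x \<noteq> z \<longrightarrow>
     (\<forall>a\<in>{x,y,z}. \<exists>d. d \<in> F \<and> is_partial A d \<and> snd d [x,y,z] = a))"

end

theory Submission imports Defs begin

lemma extend_bij:
  assumes "finite A" "X \<subseteq> A" "Y \<subseteq> A" "bij_betw f X Y"
  shows "\<exists>\<sigma>. bij_betw \<sigma> A A \<and> (\<forall>x\<in>X. \<sigma> x = f x)"
proof -
  have fin: "finite X" "finite Y" using assms finite_subset by auto
  have "card X = card Y" using assms(4) bij_betw_same_card by blast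
  hence "card (A - X) = card (A - Y)" using assms fin by (simp add: card_Diff_subset)
  then obtain g where g: "bij_betw g (A - X) (A - Y)"
    using finite_same_card_bij assms(1) by blast
  define \<sigma> where "\<sigma> x = (if x \<in> X then f x else g x)" for x
  have "bij_betw \<sigma> X Y" using assms(4) by (subst bij_betw_cong[of _ _ f]) (auto simp: \<sigma>_def)
  moreover have "bij_betw \<sigma> (A - X) (A - Y)" using g by (subst bij_betw_cong[of _ _ g]) (auto simp: \<sigma>_def)
  ultimately have "bij_betw \<sigma> (X \<union> (A - X)) (Y \<union> (A - Y))" by (rule bij_betw_combine) auto
  moreover have "X \<union> (A - X) = A" "Y \<union> (A - Y) = A" using assms by auto
  ultimately show ?thesis by (auto simp: \<sigma>_def)
qed

lemma comb1:
  assumes dom: "\<And>x y. r x y \<Longrightarrow> x\<in>X \<and> y\<in>Y"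
    and sX: "\<And>x. x\<in>X \<Longrightarrow> \<exists>y. r x y"
    and K1: "\<And>x y1 y2 y. r x y1 \<Longrightarrow> r x y2 \<Longrightarrow> y1\<noteq>y2 \<Longrightarrow> y\<in>Y \<Longrightarrow> r x y"
    and K2: "\<And>x1 x2 y x. r x1 y \<Longrightarrow> r x2 y \<Longrightarrow> x1\<noteq>x2 \<Longrightarrow> x\<in>X \<Longrightarrow> r x y"
    and h: "r x0 y1" "r x0 y2" "y1\<noteq>y2"
  shows "(\<forall>x\<in>X. \<forall>y\<in>Y. r x y) \<or> (\<exists>b\<in>Y. \<forall>x y. r x y \<longleftrightarrow> x\<in>X \<and> y\<in>Y \<and> (x=x0 \<or> y=b))"
proof (cases "\<forall>x\<in>X. \<forall>y\<in>Y. r x y")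
  case False
  have full0: "\<And>y. y\<in>Y \<Longrightarrow> r x0 y" using K1 h by blast
  from False obtain x' y' where xy: "x'\<in>X" "y'\<in>Y" "\<not> r x' y'" by blast
  then obtain b where b: "r x' b" using sX by blast
  have deg1: "\<And>y. r x' y \<Longrightarrow> y = b" using K1[of x' b _ y'] b xy by blast
  have ne: "x' \<noteq> x0" using full0 xy by blast
  have bY: "b \<in> Y" using dom b by blast
  have bfull: "\<And>x. x\<in>X \<Longrightarrow> r x b" using K2[of x0 b x'] b ne full0 bY by blast
  have sub: "\<And>x y. r x y \<Longrightarrow> x \<noteq> x0 \<Longrightarrow> y = b"
  proof (rule ccontr)
    fix x y assume rr: "r x y" "x \<noteq> x0" "y \<noteq> b"
    have "r x0 y" using full0 rr dom by blast
    hence "r x' y" using K2[of x0 y x x'] rr xy by blast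
    thus False using deg1 rr by blast
  qed
  have "\<forall>x y. r x y \<longleftrightarrow> x\<in>X \<and> y\<in>Y \<and> (x=x0 \<or> y=b)"
    using sub full0 bfull dom by blast
  thus ?thesis using bY by blast
qed blast

lemma comb2:
  assumes dom: "\<And>x y. r x y \<Longrightarrow> x\<in>X \<and> y\<in>Y"
    and sX: "\<And>x. x\<in>X \<Longrightarrow> \<exists>y. r x y"
    and sY: "\<And>y. y\<in>Y \<Longrightarrow> \<exists>x. r x y"
    and K1: "\<And>x y1 y2 y. r x y1 \<Longrightarrow> r x y2 \<Longrightarrow> y1\<noteq>y2 \<Longrightarrow> y\<in>Y \<Longrightarrow> r x y"
    and K2: "\<And>x1 x2 y x. r x1 y \<Longrightarrow> r x2 y \<Longrightarrow> x1\<noteq>x2 \<Longrightarrow> x\<in>X \<Longrightarrow> r x y"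
  shows "(\<forall>x\<in>X. \<forall>y\<in>Y. r x y)
    \<or> ((\<forall>x y1 y2. r x y1 \<longrightarrow> r x y2 \<longrightarrow> y1 = y2) \<and> (\<forall>x1 x2 y. r x1 y \<longrightarrow> r x2 y \<longrightarrow> x1 = x2))
    \<or> (\<exists>a\<in>X. \<exists>b\<in>Y. \<forall>x y. r x y \<longleftrightarrow> x\<in>X \<and> y\<in>Y \<and> (x=a \<or> y=b))"
proof -
  { fix x0 y1 y2 assume h: "r x0 y1" "r x0 y2" "y1\<noteq>y2"
    have "x0 \<in> X" using dom h by blast
    have "(\<forall>x\<in>X. \<forall>y\<in>Y. r x y) \<or> (\<exists>b\<in>Y. \<forall>x y. r x y \<longleftrightarrow> x\<in>X \<and> y\<in>Y \<and> (x=x0 \<or> y=b))"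
      by (rule comb1[of r X Y x0 y1 y2]) (use dom sX K1 K2 h in blast)+
    hence ?thesis using \<open>x0 \<in> X\<close> by blast }
  moreover
  { fix x1 x2 y0 assume h: "r x1 y0" "r x2 y0" "x1\<noteq>x2"
    have "y0 \<in> Y" using dom h by blast
    have "(\<forall>y\<in>Y. \<forall>x\<in>X. r x y) \<or> (\<exists>b\<in>X. \<forall>y x. r x y \<longleftrightarrow> y\<in>Y \<and> x\<in>X \<and> (y=y0 \<or> x=b))"
      by (rule comb1[of "\<lambda>y x. r x y" Y X y0 x1 x2]) (use dom sY K1 K2 h in blast)+
    hence ?thesis using \<open>y0 \<in> Y\<close> by blast }
  ultimately show ?thesis by blast
qed

lemma H_vals:
  assumes "H \<in> Inv A Q F" "h \<in> H" "x \<in> Q" shows "h x \<in> A"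
  using assms unfolding Inv_def by auto

lemma keyK:
  assumes fin: "finite H"
    and D: "Delta_partial A F \<or> ((\<exists>d\<in>F. is_partial A d) \<and> (\<forall>r\<in>Q. card (proj_at H r) \<le> 2))"
    and I: "H \<in> Inv A Q F"
    and pq: "p \<in> Q" "q \<in> Q"
    and hs: "h1 \<in> H" "h2 \<in> H" "h3 \<in> H" "h1 p = h2 p" "h1 q \<noteq> h2 q"
  shows "\<exists>h\<in>H. h p = h1 p \<and> h q = h3 q"
proof (cases "h3 q = h1 q \<or> h3 q = h2 q")
  case True thus ?thesis using hs by metis
next
  case False
  have inA: "h1 q \<in> A" "h2 q \<in> A" "h3 q \<in> A" "h1 p \<in> A" "h3 p \<in> A"
    using H_vals[OF I] hs pq by auto
  obtain d where d: "d \<in> F" "is_partial A d" "snd d [h1 q, h2 q, h3 q] = h3 q"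
  proof (cases "Delta_partial A F")
    case True
    thus ?thesis using that inA False hs(5) unfolding Delta_partial_def by (metis insertCI)
  next
    case nd: False
    have c: "card (proj_at H q) \<le> 2" using D nd pq by blast
    have sub: "{h1 q, h2 q, h3 q} \<subseteq> proj_at H q" using hs unfolding proj_at_def by auto
    have "card {h1 q, h2 q, h3 q} = 3" using False hs(5) by auto
    moreover have "card {h1 q, h2 q, h3 q} \<le> card (proj_at H q)"
      by (rule card_mono[OF _ sub]) (use fin in \<open>simp add: proj_at_def\<close>)
    ultimately show ?thesis using c by linarith
  qed
  have d3: "fst d = 3" using d unfolding is_partial_def by blast
  have dF: "(3, snd d) \<in> F" using d d3 by (metis prod.collapse)
  define h where "h = apply_op Q (snd d) [h1, h2, h3]"
  have hH: "h \<in> H" using I dF hs unfolding Inv_def h_def by auto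
  have "h p = snd d [h1 p, h1 p, h3 p]" using pq hs unfolding h_def apply_op_def by simp
  also have "\<dots> = h1 p" using d(2) inA unfolding is_partial_def by blast
  finally have 1: "h p = h1 p" .
  have "h q = h3 q" using pq d(3) unfolding h_def apply_op_def by simp
  thus ?thesis using 1 hH by blast
qed

lemma restr_char:
  assumes I: "H \<in> Inv A Q F" and pq: "p \<in> Q" "q \<in> Q"
  shows "restr H {p, q} = {g \<in> {p, q} \<rightarrow>\<^sub>E A. \<exists>h\<in>H. h p = g p \<and> h q = g q}"
proof (rule set_eqI, rule iffI)
  fix g assume "g \<in> restr H {p, q}"
  then obtain h where h: "h \<in> H" "g = restrict h {p,q}" unfolding restr_def by blast
  thus "g \<in> {g \<in> {p, q} \<rightarrow>\<^sub>E A. \<exists>h\<in>H. h p = g p \<and> h q = g q}"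
    using H_vals[OF I h(1)] pq by auto
next
  fix g assume "g \<in> {g \<in> {p, q} \<rightarrow>\<^sub>E A. \<exists>h\<in>H. h p = g p \<and> h q = g q}"
  then obtain h where g: "g \<in> {p, q} \<rightarrow>\<^sub>E A" "h \<in> H" "h p = g p" "h q = g q" by blast
  have "g = restrict h {p,q}"
  proof
    fix x show "g x = restrict h {p,q} x" using g by (cases "x \<in> {p,q}") (auto simp: PiE_iff extensional_def)
  qed
  thus "g \<in> restr H {p, q}" unfolding restr_def using g by blast
qed

theorem lemma2:
  fixes A :: "'a set" and Q :: "'q set" and H :: "('q \<Rightarrow> 'a) set"
    and F :: "(nat \<times> ('a list \<Rightarrow> 'a)) set" and p q :: 'q
  assumes "finite A" "A \<noteq> {}" "finite Q" "Q \<noteq> {}" "finite H" "H \<noteq> {}"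
    and "clone A F"
    and "Delta_partial A F \<or> ((\<exists>d\<in>F. is_partial A d) \<and> (\<forall>r\<in>Q. card (proj_at H r) \<le> 2))"
    and "H \<in> Inv A Q F"
    and "p \<in> Q" "q \<in> Q" "p \<noteq> q"
  shows "restr H {p, q} = {g \<in> {p, q} \<rightarrow>\<^sub>E A. g p \<in> proj_at H p \<and> g q \<in> proj_at H q}
    \<or> (\<exists>\<sigma>. bij_betw \<sigma> A A \<and> restr H {p, q} =
         {g \<in> {p, q} \<rightarrow>\<^sub>E A. g p \<in> proj_at H p \<and> g q \<in> proj_at H q \<and> g q = \<sigma> (g p)})
    \<or> (\<exists>a\<in>A. \<exists>b\<in>A. restr H {p, q} =
         {g \<in> {p, q} \<rightarrow>\<^sub>E A. g p \<in> proj_at H p \<and> g q \<in> proj_at H q \<and> (g p = a \<or> g q = b)})"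
proof -
  define X where "X = proj_at H p"
  define Y where "Y = proj_at H q"
  define r where "r x y \<longleftrightarrow> (\<exists>h\<in>H. h p = x \<and> h q = y)" for x y
  note D = assms(8) and I = assms(9) and pq = assms(10,11)
  have XA: "X \<subseteq> A" and YA: "Y \<subseteq> A" using H_vals[OF I] pq unfolding X_def Y_def proj_at_def by auto
  have dom: "\<And>x y. r x y \<Longrightarrow> x\<in>X \<and> y\<in>Y" unfolding r_def X_def Y_def proj_at_def by auto
  have sX: "\<And>x. x\<in>X \<Longrightarrow> \<exists>y. r x y" unfolding r_def X_def proj_at_def by auto
  have sY: "\<And>y. y\<in>Y \<Longrightarrow> \<exists>x. r x y" unfolding r_def Y_def proj_at_def by auto
  have K1: "\<And>x y1 y2 y. r x y1 \<Longrightarrow> r x y2 \<Longrightarrow> y1\<noteq>y2 \<Longrightarrow> y\<in>Y \<Longrightarrow> r x y"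
  proof -
    fix x y1 y2 y assume a: "r x y1" "r x y2" "y1\<noteq>y2" "y\<in>Y"
    then obtain h1 h2 h3 where h: "h1\<in>H" "h2\<in>H" "h3\<in>H" "h1 p = x" "h2 p = x" "h1 q = y1" "h2 q = y2" "h3 q = y"
      unfolding r_def Y_def proj_at_def by auto
    from keyK[OF assms(5) D I pq h(1,2,3)] h a(3) show "r x y" unfolding r_def by auto
  qed
  have K2: "\<And>x1 x2 y x. r x1 y \<Longrightarrow> r x2 y \<Longrightarrow> x1\<noteq>x2 \<Longrightarrow> x\<in>X \<Longrightarrow> r x y"
  proof -
    fix x1 x2 y x assume a: "r x1 y" "r x2 y" "x1\<noteq>x2" "x\<in>X"
    then obtain h1 h2 h3 where h: "h1\<in>H" "h2\<in>H" "h3\<in>H" "h1 q = y" "h2 q = y" "h1 p = x1" "h2 p = x2" "h3 p = x"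
      unfolding r_def X_def proj_at_def by auto
    from keyK[OF assms(5) D I pq(2,1) h(1,2,3)] h a(3) show "r x y" unfolding r_def by auto
  qed
  have RC: "restr H {p, q} = {g \<in> {p, q} \<rightarrow>\<^sub>E A. r (g p) (g q)}"
    unfolding r_def by (rule restr_char[OF I pq])
  have conv: "restr H {p, q} = {g \<in> {p, q} \<rightarrow>\<^sub>E A. g p \<in> X \<and> g q \<in> Y \<and> P (g p) (g q)}"
    if "\<forall>x y. r x y \<longleftrightarrow> x\<in>X \<and> y\<in>Y \<and> P x y" for P
    unfolding RC using that by auto
  have c: "(\<forall>x\<in>X. \<forall>y\<in>Y. r x y)
    \<or> ((\<forall>x y1 y2. r x y1 \<longrightarrow> r x y2 \<longrightarrow> y1 = y2) \<and> (\<forall>x1 x2 y. r x1 y \<longrightarrow> r x2 y \<longrightarrow> x1 = x2))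
    \<or> (\<exists>a\<in>X. \<exists>b\<in>Y. \<forall>x y. r x y \<longleftrightarrow> x\<in>X \<and> y\<in>Y \<and> (x=a \<or> y=b))"
    by (rule comb2[of r X Y]) (use dom sX sY K1 K2 in blast)+
  consider (full) "\<forall>x\<in>X. \<forall>y\<in>Y. r x y"
    | (bij) "\<forall>x y1 y2. r x y1 \<longrightarrow> r x y2 \<longrightarrow> y1 = y2" "\<forall>x1 x2 y. r x1 y \<longrightarrow> r x2 y \<longrightarrow> x1 = x2"
    | (cross) a b where "a\<in>X" "b\<in>Y" "\<forall>x y. r x y \<longleftrightarrow> x\<in>X \<and> y\<in>Y \<and> (x=a \<or> y=b)"
    using c by blast
  then show ?thesis
  proof cases
    case full
    have "\<forall>x y. r x y \<longleftrightarrow> x\<in>X \<and> y\<in>Y \<and> True" using full dom by blast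
    from conv[OF this] show ?thesis unfolding X_def Y_def by simp
  next
    case bij
    define f where "f x = (THE y. r x y)" for x
    have rf: "r x (f x)" if "x \<in> X" for x
      unfolding f_def using sX[OF that] bij(1) by (metis theI)
    have fu: "f x = y" if "r x y" for x y
      using rf[of x] dom[OF that] that bij(1) by blast
    have "bij_betw f X Y"
      unfolding bij_betw_def
    proof
      show "inj_on f X" unfolding inj_on_def using rf bij(2) by metis
      show "f ` X = Y" using rf dom sY fu by (auto intro: rev_image_eqI) (metis dom rev_image_eqI)
    qed
    from extend_bij[OF assms(1) XA YA this] obtain \<sigma> where s: "bij_betw \<sigma> A A" "\<forall>x\<in>X. \<sigma> x = f x" by blast
    have "\<forall>x y. r x y \<longleftrightarrow> x\<in>X \<and> y\<in>Y \<and> y = \<sigma> x" using s(2) fu rf dom by metis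
    from conv[OF this] s(1) show ?thesis unfolding X_def Y_def by blast
  next
    case cross
    from conv[OF cross(3)] cross(1,2) XA YA show ?thesis unfolding X_def Y_def by blast
  qed
qed

end
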